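(* Let $m\ge 2$, $n=2m$, let $t$ be an integer with $1\le t\le m-1$ such that $m/\gcd(m,t)$ is odd, and let $\gamma(X_0,\ldots,X_{m-1})\in\mathbb{F}_2[X_0,\ldots,X_{m-1}]$ be a reduced polynomial. Define $f_t:\mathbb{F}_2^n\to\mathbb{F}_2$ by $$f_t(x)=\sum_{i=0}^{n-1}\left(x_ix_{i+t}x_{i+m}+x_ix_{i+t}\right)+\sum_{i=0}^{m-1}x_ix_{i+m}+\gamma(x_0+x_m,\,x_1+x_{m+1},\,\ldots,\,x_{m-1}+x_{2m-1}),$$ where indices of $x$ are taken modulo $n$. Then $f_t$ is a bent function. Moreover, if $\gamma$ is rotation symmetric (i.e. $\gamma(X_0,X_1,\ldots,X_{m-1})=\gamma(X_1,\ldots,X_{m-1},X_0)$) of algebraic degree $d\ge 3$, then $f_t$ is a rotation symmetric bent function of algebraic degree $d$.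
   Context: Every Boolean function $f:\mathbb{F}_2^n\to\mathbb{F}_2$ is identified with its algebraic normal form, a reduced polynomial $\sum_{u\in\mathbb{F}_2^n}c_u\prod_{i=0}^{n-1}x_i^{u_i}$ with $c_u\in\mathbb{F}_2$ (each variable appears with exponent at most 1); its algebraic degree is the largest number of variables in a monomial with nonzero coefficient. $f$ is rotation symmetric if $f(x_1,x_2,\ldots,x_{n-1},x_0)=f(x_0,x_1,\ldots,x_{n-1})$ for all $x\in\mathbb{F}_2^n$. The Walsh transform is $\mathcal{W}_f(b)=\sum_{x\in\mathbb{F}_2^n}(-1)^{f(x)+\sum_i x_ib_i}$, and $f$ is bent if $\mathcal{W}_f(b)=\pm 2^{n/2}$ for all $b\in\mathbb{F}_2^n$. *)

theory Defs
  imports Main "HOL-Library.Z2"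
begin

text \<open>Vectors of F_2^n are functions nat => bit vanishing at indices >= n.\<close>
definition cube :: "nat \<Rightarrow> (nat \<Rightarrow> bit) set" where
  "cube n = {x. \<forall>i\<ge>n. x i = 0}"

text \<open>A reduced polynomial in variables X_0..X_{n-1} over F_2: coefficient c u of the
monomial prod_{i in u} X_i, supported on subsets of {..<n}.\<close>
definition is_rpoly :: "nat \<Rightarrow> (nat set \<Rightarrow> bit) \<Rightarrow> bool" where
  "is_rpoly n c \<longleftrightarrow> (\<forall>u. c u \<noteq> 0 \<longrightarrow> u \<subseteq> {..<n})"

definition rpoly_eval :: "nat \<Rightarrow> (nat set \<Rightarrow> bit) \<Rightarrow> (nat \<Rightarrow> bit) \<Rightarrow> bit" where
  "rpoly_eval n c x = (\<Sum>u\<in>Pow {..<n}. c u * (\<Prod>i\<in>u. x i))"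

definition rpoly_degree :: "(nat set \<Rightarrow> bit) \<Rightarrow> nat" where
  "rpoly_degree c = Max (insert 0 (card ` {u. c u \<noteq> 0}))"

text \<open>Algebraic degree of a Boolean function on F_2^n: degree of its algebraic normal form,
the unique reduced polynomial representing it.\<close>
definition alg_degree :: "nat \<Rightarrow> ((nat \<Rightarrow> bit) \<Rightarrow> bit) \<Rightarrow> nat" where
  "alg_degree n f = rpoly_degree (THE c. is_rpoly n c \<and> (\<forall>x\<in>cube n. rpoly_eval n c x = f x))"

definition rot :: "nat \<Rightarrow> (nat \<Rightarrow> bit) \<Rightarrow> (nat \<Rightarrow> bit)" where
  "rot n x = (\<lambda>i. if i < n then x ((i + 1) mod n) else 0)"

definition rotation_symmetric :: "nat \<Rightarrow> ((nat \<Rightarrow> bit) \<Rightarrow> bit) \<Rightarrow> bool" where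
  "rotation_symmetric n f \<longleftrightarrow> (\<forall>x\<in>cube n. f (rot n x) = f x)"

definition sgn_bit :: "bit \<Rightarrow> int" where
  "sgn_bit b = (if b = 0 then 1 else -1)"

definition walsh :: "nat \<Rightarrow> ((nat \<Rightarrow> bit) \<Rightarrow> bit) \<Rightarrow> (nat \<Rightarrow> bit) \<Rightarrow> int" where
  "walsh n f b = (\<Sum>x\<in>cube n. sgn_bit (f x + (\<Sum>i<n. x i * b i)))"

definition bent :: "nat \<Rightarrow> ((nat \<Rightarrow> bit) \<Rightarrow> bit) \<Rightarrow> bool" where
  "bent n f \<longleftrightarrow> even n \<and> (\<forall>b\<in>cube n. walsh n f b = 2 ^ (n div 2) \<or> walsh n f b = - (2 ^ (n div 2)))"

end

theory Submission
  imports Defs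
begin


declare add_bit_eq_xor[simp del] mult_bit_eq_and[simp del]

lemma bit_add_self[simp]: "(a::bit) + a = 0"
  by (cases a) simp_all
lemma bit_mult_self[simp]: "(a::bit) * a = a"
  by (cases a) simp_all
lemma bit_1_1[simp]: "(1::bit) + 1 = 0"
  by simp

lemma sgn_bit_add: "sgn_bit (a + b) = sgn_bit a * sgn_bit b"
  by (cases a; cases b) (simp_all add: sgn_bit_def)

lemma bit_of_nat: "(of_nat k :: bit) = (if odd k then 1 else 0)"
proof (induction k)
  case (Suc k) then show ?case by (cases "odd k") simp_all
qed simp

lemma cube_0: "cube 0 = {\<lambda>_. 0}"
  by (auto simp: cube_def)

lemma cube_Suc: "cube (Suc m) = cube m \<union> (\<lambda>x. x(m:=1)) ` cube m"
proof
  show "cube (Suc m) \<subseteq> cube m \<union> (\<lambda>x. x(m:=1)) ` cube m"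
  proof
    fix x assume x: "x \<in> cube (Suc m)"
    show "x \<in> cube m \<union> (\<lambda>x. x(m:=1)) ` cube m"
    proof (cases "x m = 0")
      case True
      have "\<forall>i\<ge>m. x i = 0"
      proof (intro allI impI)
        fix i assume "m \<le> i"
        then consider "i = m" | "Suc m \<le> i" by linarith
        then show "x i = 0" using x True unfolding cube_def by cases auto
      qed
      then show ?thesis by (simp add: cube_def)
    next
      case False
      then have "x = (x(m:=0))(m:=1)" by auto
      moreover have "x(m:=0) \<in> cube m" using x by (auto simp: cube_def)
      ultimately show ?thesis by blast
    qed
  qed
  show "cube m \<union> (\<lambda>x. x(m:=1)) ` cube m \<subseteq> cube (Suc m)"
    by (auto simp: cube_def)
qed

lemma finite_cube: "finite (cube m)"
  by (induction m) (simp_all add: cube_0 cube_Suc)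

lemma sum_cube_Suc:
  "(\<Sum>x\<in>cube (Suc m). F x) = (\<Sum>x\<in>cube m. F x + F (x(m:=1)))"
proof -
  have d: "cube m \<inter> (\<lambda>x. x(m:=1)) ` cube m = {}"
    by (auto simp: cube_def)
  have i: "inj_on (\<lambda>x. x(m:=1)) (cube m)"
  proof (rule inj_onI)
    fix x y assume xy: "x \<in> cube m" "y \<in> cube m" "x(m:=1) = y(m:=1)"
    show "x = y"
    proof
      fix i show "x i = y i"
        using xy(1,2) fun_cong[OF xy(3), of i] by (cases "i = m") (simp_all add: cube_def)
    qed
  qed
  show ?thesis
    unfolding cube_Suc
    by (simp add: sum.union_disjoint[OF finite_cube finite_imageI[OF finite_cube] d]
        sum.reindex[OF i] sum.distrib)
qed

lemma char_sum:
  "(\<Sum>a\<in>cube m. sgn_bit (\<Sum>k<m. a k * c k)) = (if \<forall>k<m. c k = 0 then 2^m else 0)"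
proof (induction m)
  case 0 then show ?case by (simp add: cube_0 sgn_bit_def)
next
  case (Suc m)
  have eq: "(\<Sum>k<m. (a(m:=1)) k * c k) = (\<Sum>k<m. a k * c k)" for a
    by (rule sum.cong) auto
  have "(\<Sum>a\<in>cube (Suc m). sgn_bit (\<Sum>k<Suc m. a k * c k))
      = (\<Sum>a\<in>cube m. sgn_bit (\<Sum>k<m. a k * c k) * (1 + sgn_bit (c m)))"
    unfolding sum_cube_Suc
  proof (rule sum.cong[OF refl])
    fix a assume "a \<in> cube m"
    then have "a m = 0" by (simp add: cube_def)
    then show "sgn_bit (\<Sum>k<Suc m. a k * c k) + sgn_bit (\<Sum>k<Suc m. (a(m := 1)) k * c k)
       = sgn_bit (\<Sum>k<m. a k * c k) * (1 + sgn_bit (c m))"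
      by (simp add: eq sgn_bit_add algebra_simps sgn_bit_def)
  qed
  also have "\<dots> = (\<Sum>a\<in>cube m. sgn_bit (\<Sum>k<m. a k * c k)) * (1 + sgn_bit (c m))"
    by (simp add: sum_distrib_right)
  also have "\<dots> = (if \<forall>k<Suc m. c k = 0 then 2^Suc m else 0)"
    unfolding Suc.IH by (cases "c m") (auto simp: sgn_bit_def less_Suc_eq)
  finally show ?case .
qed




definition Pk :: "nat \<Rightarrow> nat \<Rightarrow> (nat \<Rightarrow> bit) \<Rightarrow> nat \<Rightarrow> bit" where
  "Pk m t y k = y k * y ((k+t) mod m) + y ((k+m-t) mod m) + y k + 1"

lemma claimA_bits:
  fixes a0 a1 a2 a3 b0 b1 b2 b3 :: bit
  shows "a0 + a1*(1+a2) = b0 + b1*(1+b2) \<Longrightarrow> a1 + a2*(1+a3) = b1 + b2*(1+b3) \<Longrightarrow> a0 \<noteq> b0 \<Longrightarrow> a2 \<noteq> b2"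
  by (cases a0; cases a1; cases a2; cases a3; cases b0; cases b1; cases b2; cases b3) simp_all

lemma claimB_bits:
  fixes a0 a1 a2 b0 b1 b2 :: bit
  shows "a0 + a1*(1+a2) = b0 + b1*(1+b2) \<Longrightarrow> a0 \<noteq> b0 \<Longrightarrow> a1 \<noteq> b1 \<Longrightarrow> a2 \<noteq> b2 \<Longrightarrow> a2 = a1 + 1"
  by (cases a0; cases a1; cases a2; cases b0; cases b1; cases b2) simp_all

lemma back_mod: "(j::nat) < m \<Longrightarrow> t < m \<Longrightarrow> ((j + t) mod m + m - t) mod m = j"
proof (cases "j + t < m")
  case True
  assume "j < m" "t < m"
  have "(j + t) mod m = j + t" by (rule mod_less[OF True])
  moreover have "j + t + m - t = j + m" by simp
  ultimately show ?thesis using \<open>j < m\<close> by simp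
next
  case False
  assume h: "j < m" "t < m"
  then have "(j + t) mod m = j + t - m"
    using False by (simp add: mod_if)
  then show ?thesis using h False by simp
qed

lemma core_inj:
  assumes t0: "0 < t" and tm: "t < m" and odd: "odd (m div gcd m t)"
    and a: "a \<in> cube m" and b: "b \<in> cube m"
    and eq: "\<forall>k<m. Pk m t a k = Pk m t b k"
  shows "a = b"
proof (rule ccontr)
  assume "a \<noteq> b"
  then obtain i where ai: "a i \<noteq> b i" by auto
  have im: "i < m"
  proof (rule ccontr)
    assume "\<not> i < m" then show False using a b ai by (auto simp: cube_def)
  qed
  define s where "s j = (j + t) mod m" for j
  have m0: "0 < m" using tm by simp
  have sm: "s j < m" for j using m0 by (simp add: s_def)
  have R: "a j + a (s j) * (1 + a (s (s j))) = b j + b (s j) * (1 + b (s (s j)))" if j: "j < m" for j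
  proof -
    have k: "(s j + m - t) mod m = j" using back_mod[OF j tm] by (simp add: s_def)
    have ss: "(s j + t) mod m = s (s j)" by (simp add: s_def)
    have "Pk m t a (s j) = a j + a (s j) * (1 + a (s (s j))) + 1"
      unfolding Pk_def k ss by (simp add: ring_distribs ac_simps)
    moreover have "Pk m t b (s j) = b j + b (s j) * (1 + b (s (s j))) + 1"
      unfolding Pk_def k ss by (simp add: ring_distribs ac_simps)
    ultimately show ?thesis using eq sm[of j] by simp
  qed
  define p where "p k = (i + k * t) mod m" for k
  have pm: "p k < m" for k using m0 by (simp add: p_def)
  have ps: "s (p k) = p (Suc k)" for k
    unfolding s_def p_def mod_add_left_eq by (simp add: algebra_simps)
  have A: "a (p (2*k)) \<noteq> b (p (2*k))" for k
  proof (induction k)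
    case 0 then show ?case using ai im by (simp add: p_def)
  next
    case (Suc k)
    have "a (s (s (p (2*k)))) \<noteq> b (s (s (p (2*k))))"
      by (rule claimA_bits[OF R[OF pm] R[OF sm] Suc.IH])
    then show ?case by (simp add: ps)
  qed
  define K where "K = m div gcd m t"
  have Kt: "K * t = m * (t div gcd m t)"
  proof -
    have "K * t = K * (gcd m t * (t div gcd m t))" by simp
    also have "\<dots> = (K * gcd m t) * (t div gcd m t)" by (simp add: mult.assoc)
    also have "K * gcd m t = m" by (simp add: K_def)
    finally show ?thesis .
  qed
  have pK: "p (k + K) = p k" for k
  proof -
    have "i + (k + K) * t = (i + k * t) + (t div gcd m t) * m"
      by (simp add: algebra_simps Kt)
    then show ?thesis unfolding p_def by (metis mod_mult_self1)
  qed
  have D: "a (p k) \<noteq> b (p k)" for k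
  proof (cases "even k")
    case True then show ?thesis using A[of "k div 2"] by simp
  next
    case False
    then have "even (k + K)" using odd by (simp add: K_def)
    then show ?thesis using A[of "(k+K) div 2"] pK[of k] by simp
  qed
  have step: "a (p (Suc (Suc k))) = a (p (Suc k)) + 1" for k
  proof -
    have "a (p k) + a (p (Suc k)) * (1 + a (p (Suc (Suc k)))) = b (p k) + b (p (Suc k)) * (1 + b (p (Suc (Suc k))))"
      using R[OF pm[of k]] by (simp add: ps)
    then show ?thesis using claimB_bits D by blast
  qed
  have lin: "a (p (Suc k)) = a (p 1) + of_nat k" for k
  proof (induction k)
    case 0 then show ?case by simp
  next
    case (Suc k) then show ?case using step[of k] by (simp add: ac_simps)
  qed
  have "a (p (Suc K)) = a (p 1) + 1" using lin[of K] odd by (simp add: K_def bit_of_nat)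
  moreover have "p (Suc K) = p 1" using pK[of 1] by simp
  ultimately show False by simp
qed



definition Psi :: "nat \<Rightarrow> (nat \<Rightarrow> bit) \<Rightarrow> (nat \<Rightarrow> bit) \<Rightarrow> nat \<Rightarrow> bit" where
  "Psi m a y = (\<lambda>i. if i < m then a i else if i < 2*m then a (i-m) + y (i-m) else 0)"

lemma sum_cube_double:
  "(\<Sum>x\<in>cube (2*m). F x) = (\<Sum>y\<in>cube m. \<Sum>a\<in>cube m. F (Psi m a y))"
proof -
  have "(\<Sum>y\<in>cube m. \<Sum>a\<in>cube m. F (Psi m a y)) = (\<Sum>(y,a)\<in>cube m \<times> cube m. F (Psi m a y))"
    by (simp add: sum.cartesian_product)
  also have "\<dots> = (\<Sum>x\<in>cube (2*m). F x)"
  proof (rule sum.reindex_bij_witness[where i = "\<lambda>x. (\<lambda>i. if i<m then x i + x (i+m) else 0, \<lambda>i. if i<m then x i else 0)"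
        and j = "\<lambda>(y,a). Psi m a y"])
    fix p assume p: "p \<in> cube m \<times> cube m"
    obtain y a where pya: "p = (y, a)" by force
    have ya: "y \<in> cube m" "a \<in> cube m" using p pya by auto
    show "(\<lambda>i. if i < m then (case p of (y, a) \<Rightarrow> Psi m a y) i + (case p of (y, a) \<Rightarrow> Psi m a y) (i + m) else 0,
          \<lambda>i. if i < m then (case p of (y, a) \<Rightarrow> Psi m a y) i else 0) = p"
      using ya unfolding pya by (auto simp: Psi_def fun_eq_iff cube_def)
    show "(case p of (y, a) \<Rightarrow> Psi m a y) \<in> cube (2 * m)"
      unfolding pya by (auto simp: Psi_def cube_def)
  next
    fix x assume x: "x \<in> cube (2*m)"
    show "(case (\<lambda>i. if i < m then x i + x (i + m) else 0, \<lambda>i. if i < m then x i else 0) of (y, a) \<Rightarrow> Psi m a y) = x"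
    proof -
      have "Psi m (\<lambda>i. if i < m then x i else 0) (\<lambda>i. if i < m then x i + x (i + m) else 0) i = x i" for i
      proof -
        consider "i < m" | "m \<le> i \<and> i < 2*m" | "2*m \<le> i" by linarith
        then show ?thesis
        proof cases
          case 2
          then have h: "i - m < m" "i - m + m = i" "\<not> i < m" "i < 2*m" by auto
          have "Psi m (\<lambda>i. if i < m then x i else 0) (\<lambda>i. if i < m then x i + x (i + m) else 0) i
              = x (i - m) + (x (i - m) + x (i - m + m))"
            unfolding Psi_def using h(1,3,4) by simp
          then show ?thesis using h(2) by (simp add: add.assoc[symmetric])
        qed (use x in \<open>auto simp: Psi_def cube_def\<close>)
      qed
      then show ?thesis by auto
    qed
    show "(\<lambda>i. if i < m then x i + x (i + m) else 0, \<lambda>i. if i < m then x i else 0) \<in> cube m \<times> cube m"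
      by (auto simp: cube_def)
  qed (auto split: prod.splits)
  finally show ?thesis by simp
qed

lemma sum_split2: "(\<Sum>i<2*(m::nat). F i) = (\<Sum>j<m. F j + F (j+m))"
proof -
  have "(\<Sum>i<2*m. F i) = (\<Sum>i\<in>{0..<m}. F i) + (\<Sum>i\<in>{m..<2*m}. F i)"
    by (simp add: lessThan_atLeast0 sum.atLeastLessThan_concat)
  also have "(\<Sum>i\<in>{m..<2*m}. F i) = (\<Sum>i\<in>{0..<m}. F (i+m))"
    using sum.shift_bounds_nat_ivl[of F 0 m m] by (simp add: mult_2)
  finally show ?thesis by (simp add: sum.distrib lessThan_atLeast0)
qed

lemma bitid1:
  fixes aj yj ak yk bj bm :: bit
  shows "aj*ak*(aj+yj) + aj*ak + ((aj+yj)*(ak+yk)*aj + (aj+yj)*(ak+yk)) + aj*(aj+yj) + (aj*bj + (aj+yj)*bm)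
     = aj*(yj*yk + 1 + yj + bj + bm) + yj*ak + (yj*yk + yj*bm)"
  by (cases aj; cases yj; cases ak; cases yk; cases bj; cases bm) simp_all

lemma bitid2:
  fixes aj yj ak yk bj bm :: bit
  shows "aj*(ak+yk)*(aj+yj) + aj*(ak+yk) + ((aj+yj)*ak*aj + (aj+yj)*ak) + aj*(aj+yj) + (aj*bj + (aj+yj)*bm)
     = aj*(yj*yk + 1 + yj + bj + bm) + yj*ak + (0 + yj*bm)"
  by (cases aj; cases yj; cases ak; cases yk; cases bj; cases bm) simp_all

definition Gf :: "nat \<Rightarrow> nat \<Rightarrow> (nat set \<Rightarrow> bit) \<Rightarrow> (nat \<Rightarrow> bit) \<Rightarrow> (nat \<Rightarrow> bit) \<Rightarrow> bit" where
  "Gf m t g b y = (\<Sum>j<m. (if j + t < m then y j * y ((j+t) mod m) else 0) + y j * b (j+m)) + rpoly_eval m g y"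

lemma rpoly_eval_cong: "(\<And>i. i < m \<Longrightarrow> z i = z' i) \<Longrightarrow> rpoly_eval m g z = rpoly_eval m g z'"
  unfolding rpoly_eval_def
  by (intro sum.cong refl arg_cong2[where f="(*)"] prod.cong) auto

lemma fwd_mod: "(k::nat) < m \<Longrightarrow> t < m \<Longrightarrow> ((k + m - t) mod m + t) mod m = k"
proof (cases "k + m - t < m")
  case True
  assume h: "k < m" "t < m"
  have "(k + m - t) mod m = k + m - t" by (rule mod_less[OF True])
  moreover have "k + m - t + t = k + m" using h by simp
  ultimately show ?thesis using h by simp
next
  case False
  assume h: "k < m" "t < m"
  have "(k + m - t) mod m = k - t" using False h by (simp add: mod_if)
  moreover have "k - t + t = k" using False h by simp
  ultimately show ?thesis using h by simp
qed

lemma reindex_shift: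
  fixes y a :: "nat \<Rightarrow> bit"
  assumes "t < (m::nat)"
  shows "(\<Sum>j<m. y j * a ((j+t) mod m)) = (\<Sum>k<m. a k * y ((k+m-t) mod m))"
  by (rule sum.reindex_bij_witness[where j = "\<lambda>j. (j+t) mod m" and i = "\<lambda>k. (k+m-t) mod m"])
    (use assms in \<open>auto simp: back_mod fwd_mod mult_ac\<close>)




lemma key:
  fixes f :: "(nat \<Rightarrow> bit) \<Rightarrow> bit" and a y b :: "nat \<Rightarrow> bit"
  assumes tm: "0 < t" "t < m" and n: "n = 2*m"
    and fdef: "\<And>x. f x = (\<Sum>i<n. x i * x ((i + t) mod n) * x ((i + m) mod n) + x i * x ((i + t) mod n))
                 + (\<Sum>i<m. x i * x (i + m))
                 + rpoly_eval m g (\<lambda>i. x i + x (i + m))"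
  shows "f (Psi m a y) + (\<Sum>i<n. Psi m a y i * b i) = (\<Sum>k<m. a k * (Pk m t y k + b k + b (k+m))) + Gf m t g b y"
proof -
  define x where "x = Psi m a y"
  have x1: "x j = a j" if "j<m" for j using that by (simp add: Psi_def x_def)
  have x2: "x (j+m) = a j + y j" if "j<m" for j using that by (simp add: Psi_def x_def)
  define F where "F i = x i * x ((i + t) mod n) * x ((i + m) mod n) + x i * x ((i + t) mod n)" for i
  define c where "c j = y j * y ((j+t) mod m) + 1 + y j + b j + b (j+m)" for j
  define G where "G j = (if j + t < m then y j * y ((j+t) mod m) else 0) + y j * b (j+m)" for j
  have jmm: "(j+m+m) mod n = j" if "j < m" for j
  proof -
    have "(j+m+m) mod n = (j + n) mod n" using n by (simp add: mult_2 add.assoc)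
    also have "\<dots> = j mod n" by simp
    also have "\<dots> = j" using that n by simp
    finally show ?thesis .
  qed
  have per: "F j + F (j+m) + x j * x (j+m) + (x j * b j + x (j+m) * b (j+m))
     = a j * c j + y j * a ((j+t) mod m) + G j" if j: "j < m" for j
  proof (cases "j + t < m")
    case True
    have e: "(j+m) mod n = j+m" "(j+m+m) mod n = j" "(j+t) mod n = j+t" "(j+m+t) mod n = (j+t)+m" "(j+t) mod m = j+t"
      using j True n jmm[OF j] by auto
    have "F j + F (j+m) + x j * x (j+m) + (x j * b j + x (j+m) * b (j+m))
      = a j * a (j+t) * (a j + y j) + a j * a (j+t) + ((a j + y j) * (a (j+t) + y (j+t)) * a j + (a j + y j) * (a (j+t) + y (j+t)))
        + a j * (a j + y j) + (a j * b j + (a j + y j) * b (j+m))"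
      unfolding F_def e by (simp only: x1[OF j] x2[OF j] x1[OF True] x2[OF True])
    also have "\<dots> = a j * (y j * y (j+t) + 1 + y j + b j + b (j+m)) + y j * a (j+t) + (y j * y (j+t) + y j * b (j+m))"
      by (rule bitid1)
    finally show ?thesis unfolding c_def G_def e using True by simp
  next
    case False
    define k where "k = j + t - m"
    have k: "k < m" "j + t = k + m" using False j tm by (auto simp: k_def)
    have jmt: "j + m + t = k + m + m" using k(2) by simp
    have e: "(j+m) mod n = j+m" "(j+m+m) mod n = j" "(j+t) mod n = k+m" "(j+m+t) mod n = k" "(j+t) mod m = k"
      using j k n jmm[OF j] jmm[OF k(1)] unfolding jmt by auto
    have "F j + F (j+m) + x j * x (j+m) + (x j * b j + x (j+m) * b (j+m))
      = a j * (a k + y k) * (a j + y j) + a j * (a k + y k) + ((a j + y j) * a k * a j + (a j + y j) * a k)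
        + a j * (a j + y j) + (a j * b j + (a j + y j) * b (j+m))"
      unfolding F_def e by (simp only: x1[OF j] x2[OF j] x1[OF k(1)] x2[OF k(1)])
    also have "\<dots> = a j * (y j * y k + 1 + y j + b j + b (j+m)) + y j * a k + (0 + y j * b (j+m))"
      by (rule bitid2)
    finally show ?thesis unfolding c_def G_def e using False by simp
  qed
  have fx: "f x = (\<Sum>j<m. F j + F (j+m)) + (\<Sum>j<m. x j * x (j+m)) + rpoly_eval m g y"
  proof -
    have "rpoly_eval m g (\<lambda>i. x i + x (i + m)) = rpoly_eval m g y"
      by (rule rpoly_eval_cong) (simp add: x1 x2 add.assoc[symmetric])
    moreover have "f x = (\<Sum>i<n. F i) + (\<Sum>i<m. x i * x (i+m)) + rpoly_eval m g (\<lambda>i. x i + x (i + m))"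
      unfolding fdef F_def ..
    moreover have "(\<Sum>i<n. F i) = (\<Sum>j<m. F j + F (j+m))" unfolding n by (rule sum_split2)
    ultimately show ?thesis by simp
  qed
  have bx: "(\<Sum>i<n. x i * b i) = (\<Sum>j<m. x j * b j + x (j+m) * b (j+m))"
    unfolding n sum_split2 ..
  have "f x + (\<Sum>i<n. x i * b i) = (\<Sum>j<m. F j + F (j+m) + x j * x (j+m) + (x j * b j + x (j+m) * b (j+m))) + rpoly_eval m g y"
    unfolding fx bx by (simp add: sum.distrib ac_simps)
  also have "\<dots> = (\<Sum>j<m. a j * c j + y j * a ((j+t) mod m) + G j) + rpoly_eval m g y"
    by (simp add: per)
  also have "\<dots> = (\<Sum>j<m. a j * c j) + (\<Sum>j<m. y j * a ((j+t) mod m)) + ((\<Sum>j<m. G j) + rpoly_eval m g y)"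
    by (simp add: sum.distrib ac_simps)
  also have "(\<Sum>j<m. y j * a ((j+t) mod m)) = (\<Sum>k<m. a k * y ((k+m-t) mod m))"
    by (rule reindex_shift[OF tm(2)])
  also have "(\<Sum>j<m. G j) + rpoly_eval m g y = Gf m t g b y"
    unfolding Gf_def G_def ..
  also have "(\<Sum>j<m. a j * c j) + (\<Sum>k<m. a k * y ((k+m-t) mod m)) = (\<Sum>k<m. a k * (Pk m t y k + b k + b (k+m)))"
    unfolding sum.distrib[symmetric]
    by (rule sum.cong) (simp_all add: c_def Pk_def ring_distribs ac_simps)
  finally show ?thesis unfolding x_def .
qed




lemma bit_add_eq0: "((p::bit) + c = 0) = (p = c)"
  by (cases p; cases c) simp_all

lemma bent_part:
  fixes f :: "(nat \<Rightarrow> bit) \<Rightarrow> bit"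
  assumes m2: "m \<ge> 2" and n: "n = 2 * m" and t1: "1 \<le> t" and t2: "t \<le> m - 1"
    and odd: "odd (m div gcd m t)"
    and fdef: "\<And>x. f x = (\<Sum>i<n. x i * x ((i + t) mod n) * x ((i + m) mod n) + x i * x ((i + t) mod n))
                 + (\<Sum>i<m. x i * x (i + m))
                 + rpoly_eval m g (\<lambda>i. x i + x (i + m))"
  shows "bent n f"
proof -
  have tm: "0 < t" "t < m" using t1 t2 m2 by auto
  define Phi where "Phi y = (\<lambda>k. if k < m then Pk m t y k else (0::bit))" for y
  have Phi_cube: "Phi ` cube m \<subseteq> cube m" by (auto simp: Phi_def cube_def)
  have Phi_inj: "inj_on Phi (cube m)"
  proof (rule inj_onI)
    fix y1 y2 assume y: "y1 \<in> cube m" "y2 \<in> cube m" "Phi y1 = Phi y2"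
    have "\<forall>k<m. Pk m t y1 k = Pk m t y2 k"
    proof (intro allI impI)
      fix k assume "k < m" then show "Pk m t y1 k = Pk m t y2 k"
        using fun_cong[OF y(3), of k] by (simp add: Phi_def)
    qed
    then show "y1 = y2" using core_inj[OF tm odd y(1,2)] by blast
  qed
  have Phi_surj: "Phi ` cube m = cube m"
    by (rule endo_inj_surj[OF finite_cube Phi_cube Phi_inj])
  show ?thesis unfolding bent_def
  proof (intro conjI ballI)
    show "even n" using n by simp
    fix b assume b: "b \<in> cube n"
    define beta where "beta = (\<lambda>k. if k < m then b k + b (k+m) else (0::bit))"
    have "beta \<in> cube m" by (auto simp: beta_def cube_def)
    then obtain y0 where y0: "y0 \<in> cube m" "Phi y0 = beta" using Phi_surj by force
    define Q where "Q y k = Pk m t y k + b k + b (k+m)" for y k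
    have Qiff: "(\<forall>k<m. Q y k = 0) \<longleftrightarrow> y = y0" if y: "y \<in> cube m" for y
    proof
      assume h: "\<forall>k<m. Q y k = 0"
      have "\<forall>k<m. Pk m t y k = Pk m t y0 k"
      proof (intro allI impI)
        fix k assume k: "k < m"
        have "Pk m t y0 k = b k + b (k+m)" using fun_cong[OF y0(2), of k] k by (simp add: Phi_def beta_def)
        moreover have "Pk m t y k = b k + b (k+m)" using h k unfolding Q_def
          by (simp add: add.assoc bit_add_eq0)
        ultimately show "Pk m t y k = Pk m t y0 k" by simp
      qed
      then show "y = y0" using core_inj[OF tm odd y y0(1)] by blast
    next
      assume yy: "y = y0"
      show "\<forall>k<m. Q y k = 0"
      proof (intro allI impI)
        fix k assume k: "k < m"
        have "Pk m t y0 k = b k + b (k+m)" using fun_cong[OF y0(2), of k] k by (simp add: Phi_def beta_def)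
        then show "Q y k = 0" unfolding Q_def yy by (simp add: add.assoc)
      qed
    qed
    have "walsh n f b = (\<Sum>y\<in>cube m. \<Sum>a\<in>cube m. sgn_bit (f (Psi m a y) + (\<Sum>i<n. Psi m a y i * b i)))"
      unfolding walsh_def n by (rule sum_cube_double)
    also have "\<dots> = (\<Sum>y\<in>cube m. \<Sum>a\<in>cube m. sgn_bit (Gf m t g b y) * sgn_bit (\<Sum>k<m. a k * Q y k))"
      unfolding key[OF tm n fdef] Q_def by (simp add: sgn_bit_add mult.commute)
    also have "\<dots> = (\<Sum>y\<in>cube m. sgn_bit (Gf m t g b y) * (if \<forall>k<m. Q y k = 0 then 2^m else 0))"
      by (simp add: sum_distrib_left[symmetric] char_sum)
    also have "\<dots> = (\<Sum>y\<in>cube m. if y = y0 then sgn_bit (Gf m t g b y0) * 2^m else 0)"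
      by (rule sum.cong) (auto simp: Qiff)
    also have "\<dots> = sgn_bit (Gf m t g b y0) * 2^m"
      using y0(1) finite_cube by simp
    finally have "walsh n f b = sgn_bit (Gf m t g b y0) * 2^m" .
    moreover have "n div 2 = m" using n by simp
    ultimately show "walsh n f b = 2 ^ (n div 2) \<or> walsh n f b = - (2 ^ (n div 2))"
      by (simp add: sgn_bit_def)
  qed
qed




lemma rot_sum:
  fixes h :: "nat \<Rightarrow> 'a::comm_monoid_add"
  assumes "0 < n"
  shows "(\<Sum>i<n. h ((i+1) mod n)) = (\<Sum>i<n. h i)"
proof (rule sum.reindex_bij_witness[where j = "\<lambda>i. (i+1) mod n" and i = "\<lambda>j. (j + n - 1) mod n"])
  fix a assume a: "a \<in> {..<n}"
  show "((a + 1) mod n + n - 1) mod n = a"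
  proof (cases "a + 1 < n")
    case True then show ?thesis using a by simp
  next
    case False then have "a + 1 = n" using a by simp
    then show ?thesis using assms by simp
  qed
  show "(a + 1) mod n \<in> {..<n}" using assms by simp
next
  fix b assume b: "b \<in> {..<n}"
  show "((b + n - 1) mod n + 1) mod n = b"
  proof (cases "b = 0")
    case True then show ?thesis using assms by (simp add: mod_if)
  next
    case False
    then have "(b + n - 1) mod n = b - 1"
      using b by (metis Nat.add_diff_assoc2 One_nat_def Suc_leI add.commute lessThan_iff
          mod_add_self2 mod_less neq0_conv less_imp_diff_less)
    then show ?thesis using False b by simp
  qed
  show "(b + n - 1) mod n \<in> {..<n}" using assms by simp
qed simp

lemma rot_part:
  fixes f :: "(nat \<Rightarrow> bit) \<Rightarrow> bit"
  assumes m1: "m \<ge> 1" and n: "n = 2 * m"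
    and fdef: "\<And>x. f x = (\<Sum>i<n. x i * x ((i + t) mod n) * x ((i + m) mod n) + x i * x ((i + t) mod n))
                 + (\<Sum>i<m. x i * x (i + m))
                 + rpoly_eval m g (\<lambda>i. x i + x (i + m))"
    and RS: "rotation_symmetric m (rpoly_eval m g)"
  shows "rotation_symmetric n f"
  unfolding rotation_symmetric_def
proof
  fix x assume x: "x \<in> cube n"
  define r where "r = rot n x"
  have n0: "0 < n" "m < n" using m1 n by auto
  have r: "r i = x ((i+1) mod n)" if "i < n" for i using that by (simp add: r_def rot_def)
  define F where "F i = x i * x ((i + t) mod n) * x ((i + m) mod n) + x i * x ((i + t) mod n)" for i
  have C: "(\<Sum>i<n. r i * r ((i + t) mod n) * r ((i + m) mod n) + r i * r ((i + t) mod n)) = (\<Sum>i<n. F i)"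
  proof -
    have "(\<Sum>i<n. r i * r ((i + t) mod n) * r ((i + m) mod n) + r i * r ((i + t) mod n)) = (\<Sum>i<n. F ((i+1) mod n))"
    proof (rule sum.cong[OF refl])
      fix i assume i: "i \<in> {..<n}"
      have e1: "((i + t) mod n + 1) mod n = ((i+1) mod n + t) mod n"
        unfolding mod_add_left_eq by (simp add: ac_simps)
      have e2: "((i + m) mod n + 1) mod n = ((i+1) mod n + m) mod n"
        unfolding mod_add_left_eq by (simp add: ac_simps)
      show "r i * r ((i + t) mod n) * r ((i + m) mod n) + r i * r ((i + t) mod n) = F ((i+1) mod n)"
        using i unfolding F_def r[OF mod_less_divisor[OF n0(1)]] e1 e2 by (simp only: r lessThan_iff)
    qed
    also have "\<dots> = (\<Sum>i<n. F i)" by (rule rot_sum[OF n0(1)])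
    finally show ?thesis .
  qed
  define q where "q j = x j * x (j + m)" for j
  have Q: "(\<Sum>i<m. r i * r (i + m)) = (\<Sum>i<m. q i)"
  proof -
    have "(\<Sum>i<m. r i * r (i + m)) = (\<Sum>i<m. q ((i+1) mod m))"
    proof (rule sum.cong[OF refl])
      fix i assume i: "i \<in> {..<m}"
      show "r i * r (i + m) = q ((i+1) mod m)"
      proof (cases "i + 1 < m")
        case True
        then show ?thesis using i n by (simp add: r q_def)
      next
        case False
        then have "i + 1 = m" using i by simp
        then have e: "Suc (i + m) = n" "Suc i = m" using n by auto
        then show ?thesis using i n0 by (simp add: r q_def mult.commute)
      qed
    qed
    also have "\<dots> = (\<Sum>i<m. q i)" by (rule rot_sum) (use m1 in simp)
    finally show ?thesis .
  qed
  define z where "z = (\<lambda>i. if i < m then x i + x (i + m) else (0::bit))"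
  have z: "z \<in> cube m" by (auto simp: z_def cube_def)
  have G: "rpoly_eval m g (\<lambda>i. r i + r (i + m)) = rpoly_eval m g (\<lambda>i. x i + x (i + m))"
  proof -
    have "rpoly_eval m g (\<lambda>i. r i + r (i + m)) = rpoly_eval m g (rot m z)"
    proof (rule rpoly_eval_cong)
      fix i assume i: "i < m"
      show "r i + r (i + m) = rot m z i"
      proof (cases "i + 1 < m")
        case True
        then show ?thesis using i n by (simp add: r rot_def z_def)
      next
        case False
        then have "i + 1 = m" using i by simp
        then have e: "Suc (i + m) = n" "Suc i = m" using n by auto
        then show ?thesis using i n0 by (simp add: r rot_def z_def add.commute)
      qed
    qed
    also have "\<dots> = rpoly_eval m g z" using RS z by (simp add: rotation_symmetric_def)
    also have "\<dots> = rpoly_eval m g (\<lambda>i. x i + x (i + m))"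
      by (rule rpoly_eval_cong) (simp add: z_def)
    finally show ?thesis .
  qed
  show "f (rot n x) = f x"
    unfolding r_def[symmetric] fdef C Q G F_def q_def ..
qed




definition ind :: "nat set \<Rightarrow> nat \<Rightarrow> bit" where "ind v = (\<lambda>i. if i \<in> v then 1 else 0)"

lemma ind_cube: "v \<subseteq> {..<n} \<Longrightarrow> ind v \<in> cube n"
  by (auto simp: ind_def cube_def)

lemma prod_ind: "finite w \<Longrightarrow> (\<Prod>i\<in>w. ind v i) = (if w \<subseteq> v then 1 else 0)"
proof (cases "w \<subseteq> v")
  case True then show ?thesis by (auto simp: ind_def intro!: prod.neutral)
next
  case False
  assume "finite w"
  moreover from False obtain i where "i \<in> w" "i \<notin> v" by auto
  ultimately have "(\<Prod>i\<in>w. ind v i) = 0" by (intro prod_zero) (auto simp: ind_def)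
  then show ?thesis using False by simp
qed

lemma eval_ind:
  assumes v: "v \<subseteq> {..<n}"
  shows "rpoly_eval n c (ind v) = (\<Sum>w\<in>Pow v. c w)"
proof -
  have "rpoly_eval n c (ind v) = (\<Sum>w\<in>Pow {..<n}. if w \<subseteq> v then c w else 0)"
    unfolding rpoly_eval_def
  proof (rule sum.cong[OF refl])
    fix w assume "w \<in> Pow {..<n}"
    then have "finite w" by (meson PowD finite_lessThan finite_subset)
    then show "c w * (\<Prod>i\<in>w. ind v i) = (if w \<subseteq> v then c w else 0)" by (simp add: prod_ind)
  qed
  also have "\<dots> = (\<Sum>w\<in>{w\<in>Pow {..<n}. w \<subseteq> v}. c w)"
    using sum.inter_filter[of "Pow {..<n}" c "\<lambda>w. w \<subseteq> v"] by simp
  also have "{w\<in>Pow {..<n}. w \<subseteq> v} = Pow v" using v by auto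
  finally show ?thesis .
qed

lemma zero_poly:
  assumes c: "is_rpoly n c" and z: "\<forall>x\<in>cube n. rpoly_eval n c x = 0"
  shows "c u = 0"
proof (cases "u \<subseteq> {..<n}")
  case False then show ?thesis using c unfolding is_rpoly_def by blast
next
  case True
  then show ?thesis
  proof (induction "card u" arbitrary: u rule: less_induct)
    case less
    have fu: "finite u" using less.prems finite_subset by blast
    have "0 = rpoly_eval n c (ind u)" using z ind_cube[OF less.prems] by simp
    also have "\<dots> = (\<Sum>w\<in>Pow u. c w)" by (rule eval_ind[OF less.prems])
    also have "\<dots> = c u + (\<Sum>w\<in>Pow u - {u}. c w)"
      using fu by (simp add: sum.remove)
    also have "(\<Sum>w\<in>Pow u - {u}. c w) = 0"
    proof (rule sum.neutral, rule ballI)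
      fix w assume w: "w \<in> Pow u - {u}"
      then have "w \<subset> u" by auto
      then have "card w < card u" using fu by (simp add: psubset_card_mono)
      moreover have "w \<subseteq> {..<n}" using w less.prems by auto
      ultimately show "c w = 0" using less.hyps by blast
    qed
    finally show ?case by simp
  qed
qed

lemma eval_add: "rpoly_eval n (\<lambda>u. c u + c' u) x = rpoly_eval n c x + rpoly_eval n c' x"
  by (simp add: rpoly_eval_def sum.distrib ring_distribs)

lemma anf_unique:
  assumes "is_rpoly n c" "is_rpoly n c'" "\<forall>x\<in>cube n. rpoly_eval n c x = rpoly_eval n c' x"
  shows "c = c'"
proof
  fix u
  have "is_rpoly n (\<lambda>u. c u + c' u)"
    using assms(1,2) unfolding is_rpoly_def by (metis add.right_neutral add_0)
  moreover have "\<forall>x\<in>cube n. rpoly_eval n (\<lambda>u. c u + c' u) x = 0"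
    using assms(3) by (simp add: eval_add)
  ultimately have "c u + c' u = 0" by (rule zero_poly)
  then show "c u = c' u" by (simp add: bit_add_eq0)
qed

lemma alg_degree_eq:
  assumes "is_rpoly n c" "\<forall>x\<in>cube n. rpoly_eval n c x = f x"
  shows "alg_degree n f = rpoly_degree c"
proof -
  have "(THE c. is_rpoly n c \<and> (\<forall>x\<in>cube n. rpoly_eval n c x = f x)) = c"
  proof (rule the_equality)
    show "is_rpoly n c \<and> (\<forall>x\<in>cube n. rpoly_eval n c x = f x)" using assms by simp
    fix c' assume "is_rpoly n c' \<and> (\<forall>x\<in>cube n. rpoly_eval n c' x = f x)"
    then show "c' = c" using assms anf_unique[of n c' c] by auto
  qed
  then show ?thesis unfolding alg_degree_def by simp
qed




definition monom :: "nat set \<Rightarrow> nat set \<Rightarrow> bit" where "monom S u = (if u = S then 1 else 0)"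

lemma eval_mono:
  assumes "S \<subseteq> {..<n}"
  shows "rpoly_eval n (monom S) x = (\<Prod>i\<in>S. x i)"
proof -
  have "rpoly_eval n (monom S) x = (\<Sum>w\<in>Pow {..<n}. if w = S then (\<Prod>i\<in>w. x i) else 0)"
    unfolding rpoly_eval_def monom_def by (rule sum.cong) auto
  also have "\<dots> = (\<Prod>i\<in>S. x i)" using assms by simp
  finally show ?thesis .
qed

lemma eval_sum: "rpoly_eval n (\<lambda>u. \<Sum>j\<in>J. h j u) x = (\<Sum>j\<in>J. rpoly_eval n (h j) x)"
  unfolding rpoly_eval_def sum_distrib_right by (rule sum.swap)

lemma eval_smult: "rpoly_eval n (\<lambda>u. s * c u) x = s * rpoly_eval n c x"
  by (simp add: rpoly_eval_def sum_distrib_left mult.assoc)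

lemma sum_nz: "sum h A \<noteq> (0::bit) \<Longrightarrow> \<exists>a\<in>A. h a \<noteq> 0"
  by (metis sum.neutral)

lemma mod_lt2: "(a::nat) < 2*n \<Longrightarrow> a mod n = (if a < n then a else a - n)"
proof (cases "a < n")
  case False
  assume "a < 2*n"
  then have "a - n < n" using False by simp
  moreover have "a mod n = (a - n) mod n" using False by (simp add: le_mod_geq)
  ultimately show ?thesis using False by simp
qed simp

definition sec :: "nat \<Rightarrow> nat set \<Rightarrow> nat set \<Rightarrow> nat set" where
  "sec m w S = S \<union> (\<lambda>i. i + m) ` (w - S)"

definition cg :: "nat \<Rightarrow> (nat set \<Rightarrow> bit) \<Rightarrow> nat set \<Rightarrow> bit" where
  "cg m g u = (\<Sum>w\<in>Pow {..<m}. g w * (\<Sum>S\<in>Pow w. monom (sec m w S) u))"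

definition cf :: "nat \<Rightarrow> nat \<Rightarrow> nat \<Rightarrow> (nat set \<Rightarrow> bit) \<Rightarrow> nat set \<Rightarrow> bit" where
  "cf m n t g u = (\<Sum>i<n. monom {i, (i+t) mod n, (i+m) mod n} u + monom {i, (i+t) mod n} u)
     + (\<Sum>i<m. monom {i, i+m} u) + cg m g u"

lemma sec_sub: "w \<subseteq> {..<m} \<Longrightarrow> S \<subseteq> w \<Longrightarrow> sec m w S \<subseteq> {..<2*m}"
  by (auto simp: sec_def)

lemma prod_sec:
  assumes w: "w \<subseteq> {..<m}" and S: "S \<subseteq> w"
  shows "(\<Prod>i\<in>sec m w S. x i) = (\<Prod>i\<in>S. x i) * (\<Prod>i\<in>w - S. x (i + m))"
proof -
  have fw: "finite w" using w finite_subset by blast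
  have fS: "finite S" using S fw finite_subset by blast
  have d: "S \<inter> (\<lambda>i. i + m) ` (w - S) = {}" using w S by auto
  have "(\<Prod>i\<in>sec m w S. x i) = (\<Prod>i\<in>S. x i) * (\<Prod>i\<in>(\<lambda>i. i + m) ` (w - S). x i)"
    unfolding sec_def by (rule prod.union_disjoint) (use fS fw d in auto)
  also have "(\<Prod>i\<in>(\<lambda>i. i + m) ` (w - S). x i) = (\<Prod>i\<in>w - S. x (i + m))"
    by (subst prod.reindex) (auto simp: inj_on_def)
  finally show ?thesis .
qed

lemma eval_cg:
  "rpoly_eval (2*m) (cg m g) x = rpoly_eval m g (\<lambda>i. x i + x (i + m))"
proof -
  have "rpoly_eval (2*m) (cg m g) x = (\<Sum>w\<in>Pow {..<m}. g w * (\<Sum>S\<in>Pow w. rpoly_eval (2*m) (monom (sec m w S)) x))"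
    unfolding cg_def eval_sum eval_smult ..
  also have "\<dots> = (\<Sum>w\<in>Pow {..<m}. g w * (\<Prod>i\<in>w. x i + x (i + m)))"
  proof (rule sum.cong[OF refl])
    fix w assume w: "w \<in> Pow {..<m}"
    have fw: "finite w" using w finite_subset by blast
    have "(\<Sum>S\<in>Pow w. rpoly_eval (2*m) (monom (sec m w S)) x) = (\<Sum>S\<in>Pow w. (\<Prod>i\<in>S. x i) * (\<Prod>i\<in>w - S. x (i + m)))"
      by (rule sum.cong[OF refl]) (use w in \<open>simp add: eval_mono sec_sub prod_sec\<close>)
    also have "\<dots> = (\<Prod>i\<in>w. x i + x (i + m))" by (rule prod_add[OF fw, symmetric])
    finally show "g w * (\<Sum>S\<in>Pow w. rpoly_eval (2*m) (monom (sec m w S)) x) = g w * (\<Prod>i\<in>w. x i + x (i + m))"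
      by simp
  qed
  also have "\<dots> = rpoly_eval m g (\<lambda>i. x i + x (i + m))" unfolding rpoly_eval_def ..
  finally show ?thesis .
qed




lemma dist3:
  assumes "0 < (t::nat)" "t < m" "n = 2*m" "i < n"
  shows "i \<noteq> (i+t) mod n" "i \<noteq> (i+m) mod n" "(i+t) mod n \<noteq> (i+m) mod n"
    "(i+t) mod n < n" "(i+m) mod n < n"
  using assms mod_lt2[of "i+t" n] mod_lt2[of "i+m" n] by auto

lemma eval_cf:
  fixes f :: "(nat \<Rightarrow> bit) \<Rightarrow> bit"
  assumes t: "0 < t" "t < m" and n: "n = 2*m"
    and fdef: "\<And>x. f x = (\<Sum>i<n. x i * x ((i + t) mod n) * x ((i + m) mod n) + x i * x ((i + t) mod n))
                 + (\<Sum>i<m. x i * x (i + m))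
                 + rpoly_eval m g (\<lambda>i. x i + x (i + m))"
  shows "rpoly_eval n (cf m n t g) x = f x"
proof -
  have A: "rpoly_eval n (\<lambda>u. \<Sum>i<n. monom {i, (i+t) mod n, (i+m) mod n} u + monom {i, (i+t) mod n} u) x
     = (\<Sum>i<n. x i * x ((i + t) mod n) * x ((i + m) mod n) + x i * x ((i + t) mod n))"
    unfolding eval_sum
  proof (rule sum.cong[OF refl])
    fix i assume "i \<in> {..<n}"
    then have i: "i < n" by simp
    note d = dist3[OF t n i]
    have s1: "{i, (i+t) mod n, (i+m) mod n} \<subseteq> {..<n}" "{i, (i+t) mod n} \<subseteq> {..<n}"
      using d i by auto
    show "rpoly_eval n (\<lambda>u. monom {i, (i+t) mod n, (i+m) mod n} u + monom {i, (i+t) mod n} u) x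
       = x i * x ((i + t) mod n) * x ((i + m) mod n) + x i * x ((i + t) mod n)"
      unfolding eval_add using d by (simp add: eval_mono[OF s1(1)] eval_mono[OF s1(2)] mult.assoc)
  qed
  have B: "rpoly_eval n (\<lambda>u. \<Sum>i<m. monom {i, i+m} u) x = (\<Sum>i<m. x i * x (i + m))"
    unfolding eval_sum
  proof (rule sum.cong[OF refl])
    fix i assume "i \<in> {..<m}"
    then have i: "i < m" by simp
    have s: "{i, i+m} \<subseteq> {..<n}" using i n by auto
    show "rpoly_eval n (monom {i, i+m}) x = x i * x (i + m)"
      using t by (simp add: eval_mono[OF s])
  qed
  have C: "rpoly_eval n (cg m g) x = rpoly_eval m g (\<lambda>i. x i + x (i + m))"
    unfolding n by (rule eval_cg)
  show ?thesis
    unfolding cf_def eval_add A B C fdef ..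
qed



lemma card3: "card {a, b, c::nat} \<le> 3"
  by (simp add: card_insert_if)
lemma card2: "card {a, b::nat} \<le> 2"
  by (simp add: card_insert_if)

lemma gdeg:
  assumes "is_rpoly m g" "g w \<noteq> 0"
  shows "card w \<le> rpoly_degree g"
proof -
  have "{u. g u \<noteq> 0} \<subseteq> Pow {..<m}" using assms(1) by (auto simp: is_rpoly_def)
  then have "finite {u. g u \<noteq> 0}" by (rule finite_subset) simp
  then show ?thesis unfolding rpoly_degree_def using assms(2) by (intro Max_ge) auto
qed

lemma cf_supp:
  assumes t: "0 < t" "t < m" and n: "n = 2*m" and g: "is_rpoly m g" and d3: "3 \<le> rpoly_degree g"
    and nz: "cf m n t g u \<noteq> 0"
  shows "u \<subseteq> {..<n} \<and> card u \<le> rpoly_degree g"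
proof -
  consider "(\<Sum>i<n. monom {i, (i+t) mod n, (i+m) mod n} u + monom {i, (i+t) mod n} u) \<noteq> 0"
    | "(\<Sum>i<m. monom {i, i+m} u) \<noteq> 0" | "cg m g u \<noteq> 0"
    using nz unfolding cf_def by fastforce
  then show ?thesis
  proof cases
    case 1
    from sum_nz[OF 1] obtain i where i: "i < n" and "monom {i, (i+t) mod n, (i+m) mod n} u + monom {i, (i+t) mod n} u \<noteq> 0"
      by blast
    then have "u = {i, (i+t) mod n, (i+m) mod n} \<or> u = {i, (i+t) mod n}"
      by (auto simp: monom_def split: if_splits)
    moreover note dist3[OF t n i]
    ultimately show ?thesis using i card3[of i "(i+t) mod n" "(i+m) mod n"] card2[of i "(i+t) mod n"] d3 by auto
  next
    case 2
    from sum_nz[OF 2] obtain i where i: "i < m" and "monom {i, i+m} u \<noteq> 0"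
      by blast
    then have "u = {i, i+m}" by (auto simp: monom_def split: if_splits)
    then show ?thesis using i n card2[of i "i+m"] d3 by auto
  next
    case 3
    from sum_nz[OF 3[unfolded cg_def]] obtain w where w: "w \<subseteq> {..<m}" and wnz: "g w * (\<Sum>S\<in>Pow w. monom (sec m w S) u) \<noteq> 0"
      by blast
    have gw: "g w \<noteq> 0" using wnz by auto
    have "(\<Sum>S\<in>Pow w. monom (sec m w S) u) \<noteq> 0" using wnz by auto
    from sum_nz[OF this] obtain S where S: "S \<subseteq> w" and "monom (sec m w S) u \<noteq> 0" by blast
    then have u: "u = sec m w S" by (auto simp: monom_def split: if_splits)
    have fw: "finite w" using w finite_subset by blast
    have "card u \<le> card S + card ((\<lambda>i. i + m) ` (w - S))" unfolding u sec_def by (rule card_Un_le)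
    also have "\<dots> \<le> card S + card (w - S)" using card_image_le[of "w - S" "\<lambda>i. i + m"] fw by simp
    also have "\<dots> = card w" using S fw by (metis card_Diff_subset finite_subset le_add_diff_inverse card_mono)
    also have "\<dots> \<le> rpoly_degree g" by (rule gdeg[OF g gw])
    finally show ?thesis using sec_sub[OF w S] u n by simp
  qed
qed



lemma cf_low:
  assumes t: "0 < t" "t < m" and n: "n = 2*m" and g: "is_rpoly m g"
    and u0: "u0 \<subseteq> {..<m}" "3 \<le> card u0"
  shows "cf m n t g u0 = g u0"
proof -
  have A: "(\<Sum>i<n. monom {i, (i+t) mod n, (i+m) mod n} u0 + monom {i, (i+t) mod n} u0) = 0"
  proof (rule sum.neutral, rule ballI)
    fix i assume "i \<in> {..<n}"
    then have i: "i < n" by simp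
    have "u0 \<noteq> {i, (i+t) mod n}" using card2[of i "(i+t) mod n"] u0 by auto
    moreover have "u0 \<noteq> {i, (i+t) mod n, (i+m) mod n}"
    proof
      assume e: "u0 = {i, (i+t) mod n, (i+m) mod n}"
      show False
      proof (cases "i < m")
        case True
        then have "(i+m) mod n = i + m" using n by simp
        then have "i + m \<in> u0" using e by simp
        then show False using u0 by auto
      next
        case False
        then show False using e u0 by auto
      qed
    qed
    ultimately show "monom {i, (i+t) mod n, (i+m) mod n} u0 + monom {i, (i+t) mod n} u0 = 0"
      by (simp add: monom_def)
  qed
  have B: "(\<Sum>i<m. monom {i, i+m} u0) = 0"
  proof (rule sum.neutral, rule ballI)
    fix i show "monom {i, i+m} u0 = 0" using card2[of i "i+m"] u0 by (auto simp: monom_def)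
  qed
  have C: "cg m g u0 = g u0"
  proof -
    have inner: "(\<Sum>S\<in>Pow w. monom (sec m w S) u0) = (if w = u0 then 1 else 0)" if w: "w \<subseteq> {..<m}" for w
    proof -
      have fw: "finite w" using w finite_subset by blast
      have "(\<Sum>S\<in>Pow w. monom (sec m w S) u0) = (\<Sum>S\<in>Pow w. if S = w then (if w = u0 then 1 else 0) else 0)"
      proof (rule sum.cong[OF refl])
        fix S assume S: "S \<in> Pow w"
        show "monom (sec m w S) u0 = (if S = w then (if w = u0 then 1 else 0) else 0)"
        proof (cases "S = w")
          case True then show ?thesis by (auto simp: monom_def sec_def)
        next
          case False
          then obtain j where j: "j \<in> w" "j \<notin> S" using S by auto
          then have "j + m \<in> sec m w S" by (auto simp: sec_def)
          moreover have "j + m \<notin> u0" using u0 by auto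
          ultimately have "u0 \<noteq> sec m w S" by blast
          then show ?thesis using False by (auto simp: monom_def)
        qed
      qed
      also have "\<dots> = (if w = u0 then 1 else 0)" using fw by simp
      finally show ?thesis .
    qed
    have "cg m g u0 = (\<Sum>w\<in>Pow {..<m}. if w = u0 then g w else 0)"
      unfolding cg_def by (rule sum.cong[OF refl]) (auto simp: inner)
    also have "\<dots> = g u0" using u0 by simp
    finally show ?thesis .
  qed
  show ?thesis unfolding cf_def A B C by simp
qed



lemma degree_part:
  fixes f :: "(nat \<Rightarrow> bit) \<Rightarrow> bit"
  assumes t: "0 < t" "t < m" and n: "n = 2*m" and g: "is_rpoly m g"
    and fdef: "\<And>x. f x = (\<Sum>i<n. x i * x ((i + t) mod n) * x ((i + m) mod n) + x i * x ((i + t) mod n))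
                 + (\<Sum>i<m. x i * x (i + m))
                 + rpoly_eval m g (\<lambda>i. x i + x (i + m))"
    and d: "rpoly_degree g = d" "3 \<le> d"
  shows "alg_degree n f = d"
proof -
  have supp: "cf m n t g u \<noteq> 0 \<Longrightarrow> u \<subseteq> {..<n} \<and> card u \<le> d" for u
    using cf_supp[OF t n g] d by simp
  have rp: "is_rpoly n (cf m n t g)" unfolding is_rpoly_def using supp by blast
  have "alg_degree n f = rpoly_degree (cf m n t g)"
    by (rule alg_degree_eq[OF rp]) (simp add: eval_cf[OF t n fdef])
  also have "rpoly_degree (cf m n t g) = d"
  proof -
    have "{u. g u \<noteq> 0} \<subseteq> Pow {..<m}" using g unfolding is_rpoly_def by blast
    then have fg: "finite {u. g u \<noteq> 0}" by (rule finite_subset) simp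
    have "d \<in> insert 0 (card ` {u. g u \<noteq> 0})"
      unfolding d(1)[symmetric] rpoly_degree_def by (rule Max_in) (use fg in simp_all)
    then have "d \<in> card ` {u. g u \<noteq> 0}" using d(2) by simp
    then obtain u0 where u0': "u0 \<in> {u. g u \<noteq> 0}" "d = card u0" by (rule imageE)
    then have u0: "g u0 \<noteq> 0" "card u0 = d" by simp_all
    have u0m: "u0 \<subseteq> {..<m}" using g u0(1) by (auto simp: is_rpoly_def)
    have cu0: "cf m n t g u0 \<noteq> 0" using cf_low[OF t n g u0m] u0 d(2) by simp
    have "{u. cf m n t g u \<noteq> 0} \<subseteq> Pow {..<n}" using supp by blast
    then have ff: "finite {u. cf m n t g u \<noteq> 0}" by (rule finite_subset) simp
    show ?thesis unfolding rpoly_degree_def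
    proof (rule Max_eqI)
      show "finite (insert 0 (card ` {u. cf m n t g u \<noteq> 0}))" using ff by simp
      fix y assume "y \<in> insert 0 (card ` {u. cf m n t g u \<noteq> 0})"
      then consider "y = 0" | u where "cf m n t g u \<noteq> 0" "y = card u" by blast
      then show "y \<le> d" proof cases
        case 2 then show ?thesis using supp by blast
      qed simp
    next
      have "d \<in> card ` {u. cf m n t g u \<noteq> 0}" using cu0 u0(2) by (intro image_eqI[of _ _ u0]) simp_all
      then show "d \<in> insert 0 (card ` {u. cf m n t g u \<noteq> 0})" by simp
    qed
  qed
  finally show ?thesis .
qed



theorem theorem2:
  fixes m n t d :: nat and g :: "nat set \<Rightarrow> bit" and f :: "(nat \<Rightarrow> bit) \<Rightarrow> bit"
  assumes "m \<ge> 2" and "n = 2 * m"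
    and "1 \<le> t" and "t \<le> m - 1"
    and "odd (m div gcd m t)"
    and "is_rpoly m g"
    and "\<And>x. f x = (\<Sum>i<n. x i * x ((i + t) mod n) * x ((i + m) mod n) + x i * x ((i + t) mod n))
                 + (\<Sum>i<m. x i * x (i + m))
                 + rpoly_eval m g (\<lambda>i. x i + x (i + m))"
  shows "bent n f \<and>
    (rotation_symmetric m (rpoly_eval m g) \<and> rpoly_degree g = d \<and> d \<ge> 3
      \<longrightarrow> rotation_symmetric n f \<and> bent n f \<and> alg_degree n f = d)"
proof -
  have tm: "0 < t" "t < m" using assms(1,3,4) by auto
  have B: "bent n f" by (rule bent_part[OF assms(1-5,7)])
  show ?thesis
  proof (intro conjI impI B)
    assume h: "rotation_symmetric m (rpoly_eval m g) \<and> rpoly_degree g = d \<and> d \<ge> 3"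
    show "rotation_symmetric n f"
      by (rule rot_part[OF _ assms(2) assms(7)]) (use assms(1) h in auto)
    show "alg_degree n f = d"
      by (rule degree_part[OF tm assms(2) assms(6) assms(7)]) (use h in auto)
  qed
qed

end
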